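(* Let $A(x)=\sin^2(2\pi x)$, $\hat m(A)=\frac{A(1/3)+A(2/3)}{2}$, $\eta(x)=\frac{x}{4}+\frac12$, $F(x)=A(\frac{x}{2})+A(\frac{x}{4}+\frac12)$, and $V_2(x)=\lim_{n\to\infty}\sum_{i=0}^{n-1}[F(\eta^i(x))-2\hat m(A)]$ for $x\in[0,1]$. Then the function $V_1(x)=V_2\left(\frac{x+1}{2}\right)+A\left(\frac{x+1}{2}\right)-\hat m(A)$ satisfies, for all $x\in[0,1]$, $$V_1(x/2)+A(x/2)=V_2(x)+\hat m(A).$$
   Context: $\eta^i$ denotes the $i$-th iterate of $\eta$, with $\eta^0$ the identity. *)

theory Defs
  imports Complex_Main
begin

definition A :: "real \<Rightarrow> real" where
  "A x = (sin (2 * pi * x))^2"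

definition mhat :: real where
  "mhat = (A (1/3) + A (2/3)) / 2"

definition eta :: "real \<Rightarrow> real" where
  "eta x = x / 4 + 1/2"

definition F :: "real \<Rightarrow> real" where
  "F x = A (x / 2) + A (x / 4 + 1/2)"

definition V2 :: "real \<Rightarrow> real" where
  "V2 x = lim (\<lambda>n. \<Sum>i<n. F ((eta ^^ i) x) - 2 * mhat)"

definition V1 :: "real \<Rightarrow> real" where
  "V1 x = V2 ((x + 1) / 2) + A ((x + 1) / 2) - mhat"

end

theory Submission
  imports Defs
begin

lemma sin_lip: fixes a b :: real shows "\<bar>sin a - sin b\<bar> \<le> \<bar>a - b\<bar>"
proof -
  have "\<bar>sin a - sin b\<bar> = 2 * \<bar>sin ((a - b) / 2)\<bar> * \<bar>cos ((a + b) / 2)\<bar>"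
    by (simp add: sin_diff_sin abs_mult)
  also have "\<dots> \<le> 2 * \<bar>(a - b) / 2\<bar> * 1"
    by (intro mult_mono abs_sin_x_le_abs_x) auto
  finally show ?thesis by simp
qed

lemma A_lip: "\<bar>A u - A v\<bar> \<le> 4 * pi * \<bar>u - v\<bar>"
proof -
  define p where "p = sin (2*pi*u)"
  define q where "q = sin (2*pi*v)"
  have e: "A u - A v = (p - q) * (p + q)"
    unfolding A_def p_def q_def by (simp add: power2_eq_square ring_distribs)
  have "\<bar>A u - A v\<bar> = \<bar>p - q\<bar> * \<bar>p + q\<bar>"
    unfolding e by (rule abs_mult)
  also have "\<dots> \<le> \<bar>2*pi*u - 2*pi*v\<bar> * 2"
  proof (intro mult_mono)
    show "\<bar>p - q\<bar> \<le> \<bar>2*pi*u - 2*pi*v\<bar>" unfolding p_def q_def by (rule sin_lip)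
    show "\<bar>p + q\<bar> \<le> 2"
      using abs_sin_le_one[of "2*pi*u"] abs_sin_le_one[of "2*pi*v"] unfolding p_def q_def by linarith
  qed auto
  also have "\<bar>2*pi*u - 2*pi*v\<bar> = 2*pi*\<bar>u - v\<bar>"
    by (metis abs_mult abs_of_nonneg pi_ge_zero right_diff_distrib mult_nonneg_nonneg zero_le_numeral)
  finally show ?thesis by simp
qed

lemma eta_iter: "(eta ^^ i) x - 2/3 = (x - 2/3) / 4 ^ i"
  by (induction i) (auto simp: eta_def field_simps)

lemma F_bound: "\<bar>F y - 2 * mhat\<bar> \<le> 4 * pi * \<bar>y - 2/3\<bar>"
proof -
  have m: "2 * mhat = A ((2/3)/2) + A ((2/3)/4 + 1/2)"
    unfolding mhat_def by simp
  have "\<bar>F y - 2 * mhat\<bar> \<le> \<bar>A (y/2) - A ((2/3)/2)\<bar> + \<bar>A (y/4+1/2) - A ((2/3)/4 + 1/2)\<bar>"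
    unfolding m F_def by linarith
  also have "\<dots> \<le> 4*pi*\<bar>y/2 - (2/3)/2\<bar> + 4*pi*\<bar>(y/4+1/2) - ((2/3)/4 + 1/2)\<bar>"
    by (intro add_mono A_lip)
  also have "\<dots> = 4*pi*\<bar>y - 2/3\<bar> * (3/4)"
  proof -
    have "\<bar>y/2 - (2/3)/2\<bar> = \<bar>y - 2/3\<bar> / 2" by (cases "y \<ge> 2/3") auto
    moreover have "\<bar>(y/4+1/2) - ((2/3)/4 + 1/2)\<bar> = \<bar>y - 2/3\<bar> / 4" by (cases "y \<ge> 2/3") auto
    ultimately show ?thesis by (simp add: algebra_simps)
  qed
  also have "\<dots> \<le> 4*pi*\<bar>y - 2/3\<bar>" by simp
  finally show ?thesis .
qed

lemma summ: "summable (\<lambda>i. F ((eta ^^ i) x) - 2 * mhat)"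
proof (rule summable_comparison_test')
  show "summable (\<lambda>i. 4 * pi * \<bar>x - 2/3\<bar> * (1/4) ^ i)"
    by (intro summable_mult summable_geometric) auto
  fix n :: nat
  have "norm (F ((eta ^^ n) x) - 2 * mhat) \<le> 4 * pi * \<bar>(eta ^^ n) x - 2/3\<bar>"
    using F_bound by simp
  also have "\<dots> = 4 * pi * \<bar>x - 2/3\<bar> * (1/4) ^ n"
    by (simp add: eta_iter abs_divide power_one_over field_simps)
  finally show "norm (F ((eta ^^ n) x) - 2 * mhat) \<le> 4 * pi * \<bar>x - 2/3\<bar> * (1/4) ^ n" .
qed

lemma V2_eq: "V2 x = suminf (\<lambda>i. F ((eta ^^ i) x) - 2 * mhat)"
  unfolding V2_def using summable_sums[OF summ[of x], unfolded sums_def] by (rule limI)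

lemma V2_rec: "V2 x = V2 (eta x) + F x - 2 * mhat"
proof -
  have "V2 (eta x) = (\<Sum>i. F ((eta ^^ Suc i) x) - 2 * mhat)"
    unfolding V2_eq by (simp add: funpow_Suc_right del: funpow.simps)
  also have "\<dots> = V2 x - (F x - 2 * mhat)"
    unfolding V2_eq by (subst suminf_split_head[OF summ]) simp
  finally show ?thesis by simp
qed

theorem mainTheorem9:
  fixes x :: real
  assumes "0 \<le> x" and "x \<le> 1"
  shows "V1 (x / 2) + A (x / 2) = V2 x + mhat"
proof -
  have e: "(x / 2 + 1) / 2 = eta x" by (simp add: eta_def field_simps)
  show ?thesis
    unfolding V1_def e V2_rec[of x] by (simp add: F_def eta_def)
qed

end
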